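(* Let $((f_t),(g_t),(h_t))$ be a $W_{1,+}$-geodesic on $G$ and $\gamma$ an oriented path. (1) If $\gamma$ is extremal, then $C_\gamma(t)$ is constant in $t$. (2) If $\gamma\in\mathrm{SE}\Gamma_{1,x}$, then $C_\gamma(t)$ is a polynomial in $t$ of degree at most $\sup\{L(\tilde\gamma):\tilde\gamma\in\mathrm{SE}\Gamma_{2,x}\}$. (3) If $\gamma\in\mathrm{SE}\Gamma_{2,x}$, then $C_\gamma(t)$ is a polynomial in $t$ of degree at most $\sup\{L(\tilde\gamma):\tilde\gamma\in\mathrm{SE}\Gamma_{1,x}\}$.
   Context: $G$ is a connected, locally finite graph with graph distance $d$; geodesics are paths of adjacent vertices with $n=d(\gamma(0),\gamma(n))$; $L(\gamma)=n$, $e_0(\gamma)=\gamma(0)$, $e_1(\gamma)=\gamma(n)$. For finitely supported probability distributions $f_0,f_1$: $\Pi_1(f_0,f_1)$ = couplings minimizing $\sum d(x,y)\pi(x,y)$ (minimum $W_1$), $\mathcal{C}(f_0,f_1)=\{(x,y):\pi(x,y)>0$ for some $\pi\in\Pi_1\}$; $W_1$-orientation: adjacent $x,y$ get $x\to y$ iff some geodesic $\gamma$ with $(e_0(\gamma),e_1(\gamma))\in\mathcal{C}(f_0,f_1)$ has $\gamma(k)=x,\gamma(k+1)=y$. Oriented paths have $\gamma(i)\to\gamma(i+1)$, $\gamma_i=\gamma(i)$. $E(G)=\{(xy):x\to y\}$, $T(G)=\{(x_0x_1x_2):x_0\to x_1\to x_2\}$, $\mathcal{F}(x)=\{y:x\to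 y\}$, $\mathcal{E}(x)=\{y:y\to x\}$; $\nabla g(x_1)=\sum_{\mathcal{F}(x_1)}g(x_1x_2)-\sum_{\mathcal{E}(x_1)}g(x_0x_1)$, $\nabla h(x_1x_2)=\sum_{x_3\in\mathcal{F}(x_2)}h(x_1x_2x_3)-\sum_{x_0\in\mathcal{E}(x_1)}h(x_0x_1x_2)$. $W_1$-geodesic: $W_1(f_s,f_t)=|t-s|W_1(f_0,f_1)$. $W_{1,+}$-geodesic: a $W_1$-geodesic from $f_0$ to $f_1$ (graph $W_1$-oriented w.r.t. $(f_0,f_1)$), differentiable in $t$, with $g_t$ on $E(G)$, $h_t$ on $T(G)$ such that $\partial_tf_t=-\nabla g_t$, $\partial_tg_t=-\nabla h_t$, $g_t>0$, $f_t(x_1)h_t(x_0x_1x_2)=g_t(x_0x_1)g_t(x_1x_2)$. $C_\gamma(t)=f_t(\gamma_0)$ if $L(\gamma)=0$, $g_t(\gamma_0\gamma_1)$ if $L(\gamma)=1$, $\prod_{i=0}^{n-1}g_t(\gamma_i\gamma_{i+1})/\prod_{j=1}^{n-1}f_t(\gamma_j)$ if $n=L(\gamma)\ge2$. $\mathcal{A}=\{x:\mathcal{E}(x)=\emptyset\}$, $\mathcal{B}=\{x:\mathcal{F}(x)=\emptyset\}$. An oriented path is extremal if $e_0(\gamma)\in\mathcal{A}$ and $e_1(\gamma)\in\mathcal{B}$; $\mathrm{SE}\Gamma_{1,x}$ is the set of oriented paths with $e_0(\gamma)\in\mathcal{A}$, $e_1(\gamma)=x$; $\mathrm{SE}\Gamma_{2,x}$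 the set with $e_0(\gamma)=x$, $e_1(\gamma)\in\mathcal{B}$. *)

theory Defs
  imports Complex_Main "HOL-Computational_Algebra.Polynomial" "HOL-Library.Extended_Nat"
begin

text \<open>Graphs: vertex type 'v, adjacency relation adj. Paths are nonempty vertex lists;
  the path gamma has gamma(i) = gamma ! i and length L(gamma) = length gamma - 1.\<close>

definition plen :: "'v list \<Rightarrow> nat" where
  "plen \<gamma> = length \<gamma> - 1"

definition conn_lf_graph :: "('v \<Rightarrow> 'v \<Rightarrow> bool) \<Rightarrow> bool" where
  "conn_lf_graph adj \<longleftrightarrow>
     (\<forall>x y. adj x y \<longrightarrow> adj y x) \<and> (\<forall>x. \<not> adj x x) \<and>
     (\<forall>x. finite {y. adj x y}) \<and>
     (\<forall>x y. \<exists>\<gamma>. \<gamma> \<noteq> [] \<and> hd \<gamma> = x \<and> last \<gamma> = y \<and>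
               (\<forall>i. i + 1 < length \<gamma> \<longrightarrow> adj (\<gamma> ! i) (\<gamma> ! (i + 1))))"

definition walk :: "('v \<Rightarrow> 'v \<Rightarrow> bool) \<Rightarrow> 'v list \<Rightarrow> bool" where
  "walk adj \<gamma> \<longleftrightarrow> \<gamma> \<noteq> [] \<and> (\<forall>i. i + 1 < length \<gamma> \<longrightarrow> adj (\<gamma> ! i) (\<gamma> ! (i + 1)))"

definition gdist :: "('v \<Rightarrow> 'v \<Rightarrow> bool) \<Rightarrow> 'v \<Rightarrow> 'v \<Rightarrow> nat" where
  "gdist adj x y = (LEAST n. \<exists>\<gamma>. walk adj \<gamma> \<and> hd \<gamma> = x \<and> last \<gamma> = y \<and> plen \<gamma> = n)"

definition geodesic :: "('v \<Rightarrow> 'v \<Rightarrow> bool) \<Rightarrow> 'v list \<Rightarrow> bool" where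
  "geodesic adj \<gamma> \<longleftrightarrow> walk adj \<gamma> \<and> plen \<gamma> = gdist adj (hd \<gamma>) (last \<gamma>)"

definition fin_prob :: "('v \<Rightarrow> real) \<Rightarrow> bool" where
  "fin_prob f \<longleftrightarrow> finite {x. f x \<noteq> 0} \<and> (\<forall>x. f x \<ge> 0) \<and> (\<Sum>x\<in>{x. f x \<noteq> 0}. f x) = 1"

definition coupling :: "('v \<Rightarrow> real) \<Rightarrow> ('v \<Rightarrow> real) \<Rightarrow> ('v \<times> 'v \<Rightarrow> real) \<Rightarrow> bool" where
  "coupling f0 f1 \<pi> \<longleftrightarrow> finite {p. \<pi> p \<noteq> 0} \<and> (\<forall>p. \<pi> p \<ge> 0) \<and>
     (\<forall>x. f0 x = (\<Sum>p\<in>{p. \<pi> p \<noteq> 0 \<and> fst p = x}. \<pi> p)) \<and>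
     (\<forall>y. f1 y = (\<Sum>p\<in>{p. \<pi> p \<noteq> 0 \<and> snd p = y}. \<pi> p))"

definition tcost :: "('v \<Rightarrow> 'v \<Rightarrow> bool) \<Rightarrow> ('v \<times> 'v \<Rightarrow> real) \<Rightarrow> real" where
  "tcost adj \<pi> = (\<Sum>p\<in>{p. \<pi> p \<noteq> 0}. real (gdist adj (fst p) (snd p)) * \<pi> p)"

definition W1 :: "('v \<Rightarrow> 'v \<Rightarrow> bool) \<Rightarrow> ('v \<Rightarrow> real) \<Rightarrow> ('v \<Rightarrow> real) \<Rightarrow> real" where
  "W1 adj f0 f1 = Inf {tcost adj \<pi> | \<pi>. coupling f0 f1 \<pi>}"

definition Pi1 :: "('v \<Rightarrow> 'v \<Rightarrow> bool) \<Rightarrow> ('v \<Rightarrow> real) \<Rightarrow> ('v \<Rightarrow> real) \<Rightarrow> ('v \<times> 'v \<Rightarrow> real) set" where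
  "Pi1 adj f0 f1 = {\<pi>. coupling f0 f1 \<pi> \<and> tcost adj \<pi> = W1 adj f0 f1}"

definition Cset :: "('v \<Rightarrow> 'v \<Rightarrow> bool) \<Rightarrow> ('v \<Rightarrow> real) \<Rightarrow> ('v \<Rightarrow> real) \<Rightarrow> ('v \<times> 'v) set" where
  "Cset adj f0 f1 = {(x, y). \<exists>\<pi>\<in>Pi1 adj f0 f1. \<pi> (x, y) > 0}"

definition W1_orient :: "('v \<Rightarrow> 'v \<Rightarrow> bool) \<Rightarrow> ('v \<Rightarrow> real) \<Rightarrow> ('v \<Rightarrow> real) \<Rightarrow> 'v \<Rightarrow> 'v \<Rightarrow> bool" where
  "W1_orient adj f0 f1 x y \<longleftrightarrow> adj x y \<and>
     (\<exists>\<gamma> k. geodesic adj \<gamma> \<and> (hd \<gamma>, last \<gamma>) \<in> Cset adj f0 f1 \<and>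
            k + 1 < length \<gamma> \<and> \<gamma> ! k = x \<and> \<gamma> ! (k + 1) = y)"

definition Fwd :: "('v \<Rightarrow> 'v \<Rightarrow> bool) \<Rightarrow> 'v \<Rightarrow> 'v set" where
  "Fwd arr x = {y. arr x y}"

definition Bwd :: "('v \<Rightarrow> 'v \<Rightarrow> bool) \<Rightarrow> 'v \<Rightarrow> 'v set" where
  "Bwd arr x = {y. arr y x}"

definition Aset :: "('v \<Rightarrow> 'v \<Rightarrow> bool) \<Rightarrow> 'v set" where
  "Aset arr = {x. Bwd arr x = {}}"

definition Bset :: "('v \<Rightarrow> 'v \<Rightarrow> bool) \<Rightarrow> 'v set" where
  "Bset arr = {x. Fwd arr x = {}}"

definition oriented_path :: "('v \<Rightarrow> 'v \<Rightarrow> bool) \<Rightarrow> 'v list \<Rightarrow> bool" where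
  "oriented_path arr \<gamma> \<longleftrightarrow> \<gamma> \<noteq> [] \<and> (\<forall>i. i + 1 < length \<gamma> \<longrightarrow> arr (\<gamma> ! i) (\<gamma> ! (i + 1)))"

definition extremal :: "('v \<Rightarrow> 'v \<Rightarrow> bool) \<Rightarrow> 'v list \<Rightarrow> bool" where
  "extremal arr \<gamma> \<longleftrightarrow> oriented_path arr \<gamma> \<and> hd \<gamma> \<in> Aset arr \<and> last \<gamma> \<in> Bset arr"

definition SEG1 :: "('v \<Rightarrow> 'v \<Rightarrow> bool) \<Rightarrow> 'v \<Rightarrow> 'v list set" where
  "SEG1 arr x = {\<gamma>. oriented_path arr \<gamma> \<and> hd \<gamma> \<in> Aset arr \<and> last \<gamma> = x}"

definition SEG2 :: "('v \<Rightarrow> 'v \<Rightarrow> bool) \<Rightarrow> 'v \<Rightarrow> 'v list set" where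
  "SEG2 arr x = {\<gamma>. oriented_path arr \<gamma> \<and> hd \<gamma> = x \<and> last \<gamma> \<in> Bset arr}"

definition div_v :: "('v \<Rightarrow> 'v \<Rightarrow> bool) \<Rightarrow> ('v \<Rightarrow> 'v \<Rightarrow> real) \<Rightarrow> 'v \<Rightarrow> real" where
  "div_v arr g x1 = (\<Sum>x2\<in>Fwd arr x1. g x1 x2) - (\<Sum>x0\<in>Bwd arr x1. g x0 x1)"

definition div_e :: "('v \<Rightarrow> 'v \<Rightarrow> bool) \<Rightarrow> ('v \<Rightarrow> 'v \<Rightarrow> 'v \<Rightarrow> real) \<Rightarrow> 'v \<Rightarrow> 'v \<Rightarrow> real" where
  "div_e arr h x1 x2 = (\<Sum>x3\<in>Fwd arr x2. h x1 x2 x3) - (\<Sum>x0\<in>Bwd arr x1. h x0 x1 x2)"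

definition W1plus_geodesic ::
  "('v \<Rightarrow> 'v \<Rightarrow> bool) \<Rightarrow> (real \<Rightarrow> 'v \<Rightarrow> real) \<Rightarrow> (real \<Rightarrow> 'v \<Rightarrow> 'v \<Rightarrow> real)
     \<Rightarrow> (real \<Rightarrow> 'v \<Rightarrow> 'v \<Rightarrow> 'v \<Rightarrow> real) \<Rightarrow> bool" where
  "W1plus_geodesic adj f g h \<longleftrightarrow>
     (\<forall>t\<in>{0..1}. fin_prob (f t)) \<and>
     (\<forall>s\<in>{0..1}. \<forall>t\<in>{0..1}. W1 adj (f s) (f t) = \<bar>t - s\<bar> * W1 adj (f 0) (f 1)) \<and>
     (\<forall>x. \<forall>t\<in>{0..1}. (\<lambda>\<tau>. f \<tau> x) differentiable (at t within {0..1})) \<and>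
     (\<forall>t\<in>{0<..<1}. \<forall>x.
        ((\<lambda>\<tau>. f \<tau> x) has_real_derivative - div_v (W1_orient adj (f 0) (f 1)) (g t) x) (at t)) \<and>
     (\<forall>t\<in>{0<..<1}. \<forall>x y. W1_orient adj (f 0) (f 1) x y \<longrightarrow>
        ((\<lambda>\<tau>. g \<tau> x y) has_real_derivative - div_e (W1_orient adj (f 0) (f 1)) (h t) x y) (at t)) \<and>
     (\<forall>t\<in>{0<..<1}. \<forall>x y. W1_orient adj (f 0) (f 1) x y \<longrightarrow> g t x y > 0) \<and>
     (\<forall>t\<in>{0<..<1}. \<forall>x0 x1 x2. W1_orient adj (f 0) (f 1) x0 x1 \<and> W1_orient adj (f 0) (f 1) x1 x2
        \<longrightarrow> f t x1 * h t x0 x1 x2 = g t x0 x1 * g t x1 x2)"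

definition Cpath :: "(real \<Rightarrow> 'v \<Rightarrow> real) \<Rightarrow> (real \<Rightarrow> 'v \<Rightarrow> 'v \<Rightarrow> real) \<Rightarrow> 'v list \<Rightarrow> real \<Rightarrow> real" where
  "Cpath f g \<gamma> t =
     (if plen \<gamma> = 0 then f t (\<gamma> ! 0)
      else if plen \<gamma> = 1 then g t (\<gamma> ! 0) (\<gamma> ! 1)
      else (\<Prod>i<plen \<gamma>. g t (\<gamma> ! i) (\<gamma> ! (i + 1))) / (\<Prod>j\<in>{1..plen \<gamma> - 1}. f t (\<gamma> ! j)))"

end

theory Submission
  imports Defs
begin


lemma DERIV_prod_log:
  fixes u :: "'i \<Rightarrow> real \<Rightarrow> real"
  assumes "finite I" "\<And>i. i \<in> I \<Longrightarrow> (u i has_real_derivative u i t * a i) (at t)"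
  shows "((\<lambda>\<tau>. \<Prod>i\<in>I. u i \<tau>) has_real_derivative (\<Prod>i\<in>I. u i t) * (\<Sum>i\<in>I. a i)) (at t)"
  using assms
proof (induction I rule: finite_induct)
  case empty
  then show ?case by simp
next
  case (insert j I)
  have d1: "(u j has_real_derivative u j t * a j) (at t)" using insert by auto
  have d2: "((\<lambda>\<tau>. \<Prod>i\<in>I. u i \<tau>) has_real_derivative (\<Prod>i\<in>I. u i t) * (\<Sum>i\<in>I. a i)) (at t)"
    using insert by auto
  have "((\<lambda>\<tau>. u j \<tau> * (\<Prod>i\<in>I. u i \<tau>)) has_real_derivative
     u j t * a j * (\<Prod>i\<in>I. u i t) + ((\<Prod>i\<in>I. u i t) * (\<Sum>i\<in>I. a i)) * u j t) (at t)"
    by (rule DERIV_mult[OF d1 d2])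
  moreover have "u j t * a j * (\<Prod>i\<in>I. u i t) + ((\<Prod>i\<in>I. u i t) * (\<Sum>i\<in>I. a i)) * u j t
      = (\<Prod>i\<in>insert j I. u i t) * (\<Sum>i\<in>insert j I. a i)"
    using insert by (simp add: algebra_simps)
  ultimately show ?case using insert by simp
qed

lemma DERIV_quot_log:
  fixes P Q :: "real \<Rightarrow> real"
  assumes "(P has_real_derivative P t * A) (at t)" "(Q has_real_derivative Q t * B) (at t)" "Q t \<noteq> 0"
  shows "((\<lambda>\<tau>. P \<tau> / Q \<tau>) has_real_derivative (P t / Q t) * (A - B)) (at t)"
proof -
  have "((\<lambda>\<tau>. P \<tau> / Q \<tau>) has_real_derivative (P t * A * Q t - P t * (Q t * B)) / (Q t * Q t)) (at t)"
    by (rule DERIV_divide[OF assms])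
  moreover have "(P t * A * Q t - P t * (Q t * B)) / (Q t * Q t) = (P t / Q t) * (A - B)"
    using assms(3) by (simp add: field_simps)
  ultimately show ?thesis by simp
qed

lemma const_on_01:
  fixes F :: "real \<Rightarrow> real"
  assumes "\<And>t. t \<in> {0<..<1} \<Longrightarrow> (F has_real_derivative 0) (at t)"
    "s \<in> {0<..<1}" "t \<in> {0<..<1}"
  shows "F s = F t"
  using DERIV_isconst3[of 0 1 s t F] assms by auto

definition antider :: "real poly \<Rightarrow> real poly" where
  "antider q = (\<Sum>i\<le>degree q. monom (coeff q i / real (Suc i)) (Suc i))"

lemma pderiv_sum: "pderiv (sum F A) = (\<Sum>a\<in>A. pderiv (F a))"
  by (induction A rule: infinite_finite_induct) (auto simp: pderiv_add)

lemma antider_pderiv: "pderiv (antider q) = q"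
proof -
  have "pderiv (antider q) = (\<Sum>i\<le>degree q. monom (coeff q i) i)"
    unfolding antider_def pderiv_sum pderiv_monom
    by (intro sum.cong) (auto simp: field_simps)
  also have "\<dots> = q" by (rule poly_as_sum_of_monoms)
  finally show ?thesis .
qed

lemma antider_degree: "degree (antider q) \<le> Suc (degree q)"
  unfolding antider_def
  by (rule degree_sum_le) (auto intro: order.trans[OF degree_monom_le])

lemma poly_from_deriv:
  fixes F :: "real \<Rightarrow> real"
  assumes "\<And>t. t \<in> {0<..<1} \<Longrightarrow> (F has_real_derivative poly q t) (at t)"
  shows "\<exists>P. (\<forall>t\<in>{0<..<1}. F t = poly P t) \<and> degree P \<le> Suc (degree q)"
proof -
  define G where "G t = F t - poly (antider q) t" for t
  have "(G has_real_derivative 0) (at t)" if "t \<in> {0<..<1}" for t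
  proof -
    have "(G has_real_derivative poly q t - poly (pderiv (antider q)) t) (at t)"
      unfolding G_def by (intro DERIV_diff assms that poly_DERIV)
    then show ?thesis by (simp add: antider_pderiv)
  qed
  then have c: "G t = G (1/2)" if "t \<in> {0<..<1}" for t
    using const_on_01[of G t "1/2"] that by auto
  define P where "P = antider q + [:G (1/2):]"
  have "F t = poly P t" if "t \<in> {0<..<1}" for t
    using c[OF that] unfolding P_def G_def by simp
  moreover have "degree P \<le> Suc (degree q)"
    unfolding P_def using antider_degree[of q]
    by (metis degree_add_le degree_pCons_0 le_zero_eq zero_le)
  ultimately show ?thesis by blast
qed



locale geo =
  fixes adj :: "'v \<Rightarrow> 'v \<Rightarrow> bool"
    and f :: "real \<Rightarrow> 'v \<Rightarrow> real"
    and g :: "real \<Rightarrow> 'v \<Rightarrow> 'v \<Rightarrow> real"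
    and h :: "real \<Rightarrow> 'v \<Rightarrow> 'v \<Rightarrow> 'v \<Rightarrow> real"
  assumes conn: "conn_lf_graph adj"
    and geo: "W1plus_geodesic adj f g h"
begin

abbreviation "arr \<equiv> W1_orient adj (f 0) (f 1)"

definition In :: "real \<Rightarrow> 'v \<Rightarrow> real" where "In t x = (\<Sum>w\<in>Bwd arr x. g t w x)"
definition Out :: "real \<Rightarrow> 'v \<Rightarrow> real" where "Out t x = (\<Sum>y\<in>Fwd arr x. g t x y)"

lemma arr_adj: "arr x y \<Longrightarrow> adj x y" by (simp add: W1_orient_def)

lemma fin_Fwd: "finite (Fwd arr x)"
proof -
  have "Fwd arr x \<subseteq> {y. adj x y}" using arr_adj by (auto simp: Fwd_def)
  moreover have "finite {y. adj x y}" using conn by (simp add: conn_lf_graph_def)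
  ultimately show ?thesis by (rule finite_subset)
qed

lemma fin_Bwd: "finite (Bwd arr x)"
proof -
  have "Bwd arr x \<subseteq> {y. adj x y}" using arr_adj conn by (auto simp: Bwd_def conn_lf_graph_def)
  moreover have "finite {y. adj x y}" using conn by (simp add: conn_lf_graph_def)
  ultimately show ?thesis by (rule finite_subset)
qed

lemma gpos: "t \<in> {0<..<1} \<Longrightarrow> arr x y \<Longrightarrow> g t x y > 0"
  using geo by (simp add: W1plus_geodesic_def)

lemma fnz: assumes "t \<in> {0<..<1}" "arr w x" "arr x y" shows "f t x \<noteq> 0"
proof
  assume "f t x = 0"
  moreover have "f t x * h t w x y = g t w x * g t x y"
    using geo assms by (simp add: W1plus_geodesic_def)
  moreover have "g t w x * g t x y > 0" using gpos assms by simp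
  ultimately show False by (metis mult_zero_left less_irrefl)
qed

lemma hform: assumes "t \<in> {0<..<1}" "arr w x" "arr x y"
  shows "h t w x y = g t w x * g t x y / f t x"
proof -
  have "f t x * h t w x y = g t w x * g t x y"
    using geo assms by (simp add: W1plus_geodesic_def)
  then show ?thesis using fnz[OF assms] by (simp add: field_simps)
qed

lemma Df: "t \<in> {0<..<1} \<Longrightarrow> ((\<lambda>\<tau>. f \<tau> x) has_real_derivative In t x - Out t x) (at t)"
  using geo by (simp add: W1plus_geodesic_def div_v_def In_def Out_def)

lemma Dg: assumes "t \<in> {0<..<1}" "arr x y"
  shows "((\<lambda>\<tau>. g \<tau> x y) has_real_derivative g t x y * (In t x / f t x - Out t y / f t y)) (at t)"
proof -
  have d: "((\<lambda>\<tau>. g \<tau> x y) has_real_derivative - div_e arr (h t) x y) (at t)"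
    using geo assms by (simp add: W1plus_geodesic_def)
  have s1: "(\<Sum>z\<in>Fwd arr y. h t x y z) = g t x y * (Out t y / f t y)"
    unfolding Out_def sum_divide_distrib sum_distrib_left
    by (rule sum.cong) (auto simp: Fwd_def hform[OF assms(1,2)])
  have s2: "(\<Sum>w\<in>Bwd arr x. h t w x y) = g t x y * (In t x / f t x)"
    unfolding In_def sum_divide_distrib sum_distrib_left
    by (rule sum.cong) (auto simp: Bwd_def hform[OF assms(1) _ assms(2)])
  show ?thesis using d unfolding div_e_def s1 s2 by (simp add: algebra_simps)
qed

end


definition Pg :: "(real \<Rightarrow> 'v \<Rightarrow> 'v \<Rightarrow> real) \<Rightarrow> 'v list \<Rightarrow> real \<Rightarrow> real" where
  "Pg g \<gamma> \<tau> = (\<Prod>i<plen \<gamma>. g \<tau> (\<gamma> ! i) (\<gamma> ! (i + 1)))"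
definition Qf :: "(real \<Rightarrow> 'v \<Rightarrow> real) \<Rightarrow> 'v list \<Rightarrow> real \<Rightarrow> real" where
  "Qf f \<gamma> \<tau> = (\<Prod>j<plen \<gamma> - 1. f \<tau> (\<gamma> ! Suc j))"

lemma Cpath_quot: "plen \<gamma> \<ge> 1 \<Longrightarrow> Cpath f g \<gamma> \<tau> = Pg g \<gamma> \<tau> / Qf f \<gamma> \<tau>"
proof (cases "plen \<gamma> = 1")
  case True
  then show ?thesis by (simp add: Cpath_def Pg_def Qf_def)
next
  case False
  assume "plen \<gamma> \<ge> 1"
  with False have "plen \<gamma> \<ge> 2" by simp
  then have "{1..plen \<gamma> - 1} = {Suc 0..plen \<gamma> - 1}" by simp
  then show ?thesis using False \<open>plen \<gamma> \<ge> 2\<close>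
    by (simp add: Cpath_def Pg_def Qf_def prod.atLeast1_atMost_eq)
qed

lemma plen_Cons: "\<gamma> \<noteq> [] \<Longrightarrow> plen (w # \<gamma>) = Suc (plen \<gamma>)"
  by (simp add: plen_def)
lemma plen_snoc: "\<gamma> \<noteq> [] \<Longrightarrow> plen (\<gamma> @ [y]) = Suc (plen \<gamma>)"
  by (simp add: plen_def)

lemma Pg_Cons: "\<gamma> \<noteq> [] \<Longrightarrow> Pg g (w # \<gamma>) t = g t w (\<gamma> ! 0) * Pg g \<gamma> t"
  unfolding Pg_def plen_Cons prod.lessThan_Suc_shift by simp

lemma Qf_Cons: "plen \<gamma> \<ge> 1 \<Longrightarrow> \<gamma> \<noteq> [] \<Longrightarrow> Qf f (w # \<gamma>) t = f t (\<gamma> ! 0) * Qf f \<gamma> t"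
proof -
  assume a: "plen \<gamma> \<ge> 1" "\<gamma> \<noteq> []"
  then obtain m where m: "plen \<gamma> = Suc m" by (cases "plen \<gamma>") auto
  have "Qf f (w # \<gamma>) t = (\<Prod>j<Suc m. f t (\<gamma> ! j))"
    using a m by (simp add: Qf_def plen_Cons)
  also have "\<dots> = f t (\<gamma> ! 0) * (\<Prod>j<m. f t (\<gamma> ! Suc j))" by (rule prod.lessThan_Suc_shift)
  finally show ?thesis using m by (simp add: Qf_def)
qed

lemma Pg_snoc: assumes "\<gamma> \<noteq> []"
  shows "Pg g (\<gamma> @ [y]) t = Pg g \<gamma> t * g t (\<gamma> ! plen \<gamma>) y"
proof -
  have L: "length \<gamma> = Suc (plen \<gamma>)" using assms by (simp add: plen_def)
  have "Pg g (\<gamma> @ [y]) t = (\<Prod>i<plen \<gamma>. g t ((\<gamma>@[y]) ! i) ((\<gamma>@[y]) ! (i + 1))) *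
          g t ((\<gamma>@[y]) ! plen \<gamma>) ((\<gamma>@[y]) ! Suc (plen \<gamma>))"
    by (simp add: Pg_def plen_snoc[OF assms])
  also have "(\<Prod>i<plen \<gamma>. g t ((\<gamma>@[y]) ! i) ((\<gamma>@[y]) ! (i + 1))) = Pg g \<gamma> t"
    unfolding Pg_def by (rule prod.cong) (auto simp: nth_append L)
  also have "(\<gamma>@[y]) ! plen \<gamma> = \<gamma> ! plen \<gamma>" by (simp add: nth_append L)
  also have "(\<gamma>@[y]) ! Suc (plen \<gamma>) = y" by (metis L nth_append_length)
  finally show ?thesis .
qed

lemma Qf_snoc: assumes "plen \<gamma> \<ge> 1" "\<gamma> \<noteq> []"
  shows "Qf f (\<gamma> @ [y]) t = Qf f \<gamma> t * f t (\<gamma> ! plen \<gamma>)"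
proof -
  have L: "length \<gamma> = Suc (plen \<gamma>)" using assms by (simp add: plen_def)
  obtain m where m: "plen \<gamma> = Suc m" using assms by (cases "plen \<gamma>") auto
  have "Qf f (\<gamma> @ [y]) t = (\<Prod>j<plen \<gamma>. f t (\<gamma> ! Suc j))"
    unfolding Qf_def plen_snoc[OF assms(2)] by (rule prod.cong) (auto simp: nth_append L)
  also have "\<dots> = Qf f \<gamma> t * f t (\<gamma> ! plen \<gamma>)" by (simp add: Qf_def m)
  finally show ?thesis .
qed

context geo begin

lemma Cpath_deriv:
  assumes op: "oriented_path arr \<gamma>" and t: "t \<in> {0<..<1}"
  shows "(Cpath f g \<gamma> has_real_derivative
     (\<Sum>w\<in>Bwd arr (hd \<gamma>). Cpath f g (w # \<gamma>) t) - (\<Sum>y\<in>Fwd arr (last \<gamma>). Cpath f g (\<gamma> @ [y]) t)) (at t)"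
proof -
  have ne: "\<gamma> \<noteq> []" and ar: "\<And>i. i + 1 < length \<gamma> \<Longrightarrow> arr (\<gamma> ! i) (\<gamma> ! (i + 1))"
    using op by (auto simp: oriented_path_def)
  define n where "n = plen \<gamma>"
  have L: "length \<gamma> = Suc n" using ne by (simp add: plen_def n_def)
  have hd: "hd \<gamma> = \<gamma> ! 0" using ne by (simp add: hd_conv_nth)
  have lst: "last \<gamma> = \<gamma> ! n" using ne L by (simp add: last_conv_nth)
  show ?thesis
  proof (cases "n = 0")
    case True
    then have g1: "\<gamma> = [\<gamma> ! 0]" using L by (metis One_nat_def length_0_conv length_Suc_conv nth_Cons_0)
    have e: "Cpath f g \<gamma> = (\<lambda>\<tau>. f \<tau> (\<gamma> ! 0))" using True by (simp add: Cpath_def n_def fun_eq_iff)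
    have e1: "Cpath f g (w # \<gamma>) t = g t w (\<gamma> ! 0)" for w
      by (subst g1) (simp add: Cpath_def plen_def)
    have e2: "Cpath f g (\<gamma> @ [y]) t = g t (\<gamma> ! 0) y" for y
      by (subst g1) (simp add: Cpath_def plen_def)
    show ?thesis unfolding e e1 e2 hd lst True using Df[OF t, of "\<gamma> ! 0"]
      by (simp add: In_def Out_def)
  next
    case False
    then obtain m where m: "n = Suc m" by (metis not0_implies_Suc)
    have n1: "plen \<gamma> \<ge> 1" using m n_def by simp
    let ?ff = "\<lambda>i. f t (\<gamma> ! i)"
    let ?a = "\<lambda>i. In t (\<gamma> ! i) / ?ff i - Out t (\<gamma> ! (i + 1)) / ?ff (i + 1)"
    let ?b = "\<lambda>j. (In t (\<gamma> ! Suc j) - Out t (\<gamma> ! Suc j)) / ?ff (Suc j)"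
    have fnz': "?ff (Suc j) \<noteq> 0" if "j < m" for j
    proof -
      have "arr (\<gamma> ! j) (\<gamma> ! Suc j)" "arr (\<gamma> ! Suc j) (\<gamma> ! Suc (Suc j))"
        using ar[of j] ar[of "Suc j"] that L m by simp_all
      then show ?thesis using fnz[OF t] by blast
    qed
    have dP: "(Pg g \<gamma> has_real_derivative Pg g \<gamma> t * (\<Sum>i<n. ?a i)) (at t)"
    proof -
      have "((\<lambda>\<tau>. \<Prod>i<n. g \<tau> (\<gamma> ! i) (\<gamma> ! (i + 1))) has_real_derivative
            (\<Prod>i<n. g t (\<gamma> ! i) (\<gamma> ! (i + 1))) * (\<Sum>i<n. ?a i)) (at t)"
        by (rule DERIV_prod_log) (use Dg[OF t] ar L in auto)
      then show ?thesis by (simp add: Pg_def[abs_def] n_def)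
    qed
    have dQ: "(Qf f \<gamma> has_real_derivative Qf f \<gamma> t * (\<Sum>j<m. ?b j)) (at t)"
    proof -
      have "((\<lambda>\<tau>. \<Prod>j<m. f \<tau> (\<gamma> ! Suc j)) has_real_derivative
            (\<Prod>j<m. f t (\<gamma> ! Suc j)) * (\<Sum>j<m. ?b j)) (at t)"
      proof (rule DERIV_prod_log)
        fix j assume "j \<in> {..<m}"
        then have "?ff (Suc j) * ?b j = In t (\<gamma> ! Suc j) - Out t (\<gamma> ! Suc j)"
          using fnz'[of j] by simp
        then show "((\<lambda>\<tau>. f \<tau> (\<gamma> ! Suc j)) has_real_derivative ?ff (Suc j) * ?b j) (at t)"
          using Df[OF t] by simp
      qed simp
      then show ?thesis by (simp add: Qf_def[abs_def] n_def[symmetric] m)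
    qed
    have Qnz: "Qf f \<gamma> t \<noteq> 0"
      unfolding Qf_def using fnz' by (simp add: n_def[symmetric] m)
    have e: "Cpath f g \<gamma> = (\<lambda>\<tau>. Pg g \<gamma> \<tau> / Qf f \<gamma> \<tau>)"
      using Cpath_quot[OF n1] by (simp add: fun_eq_iff)
    have D: "(Cpath f g \<gamma> has_real_derivative
              (Pg g \<gamma> t / Qf f \<gamma> t) * ((\<Sum>i<n. ?a i) - (\<Sum>j<m. ?b j))) (at t)"
      unfolding e by (rule DERIV_quot_log[OF dP dQ Qnz])
    have tel: "(\<Sum>i<n. ?a i) - (\<Sum>j<m. ?b j) = In t (\<gamma> ! 0) / ?ff 0 - Out t (\<gamma> ! n) / ?ff n"
    proof -
      have s1: "(\<Sum>i<n. ?a i) = (\<Sum>i<Suc m. In t (\<gamma> ! i) / ?ff i) - (\<Sum>i<Suc m. Out t (\<gamma> ! Suc i) / ?ff (Suc i))"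
        unfolding m by (simp add: sum_subtractf)
      have s2: "(\<Sum>j<m. ?b j) = (\<Sum>j<m. In t (\<gamma> ! Suc j) / ?ff (Suc j)) - (\<Sum>j<m. Out t (\<gamma> ! Suc j) / ?ff (Suc j))"
        by (simp add: sum_subtractf diff_divide_distrib)
      have s3: "(\<Sum>i<Suc m. In t (\<gamma> ! i) / ?ff i) = In t (\<gamma> ! 0) / ?ff 0 + (\<Sum>j<m. In t (\<gamma> ! Suc j) / ?ff (Suc j))"
        by (rule sum.lessThan_Suc_shift)
      have s4: "(\<Sum>i<Suc m. Out t (\<gamma> ! Suc i) / ?ff (Suc i)) = (\<Sum>j<m. Out t (\<gamma> ! Suc j) / ?ff (Suc j)) + Out t (\<gamma> ! Suc m) / ?ff (Suc m)"
        by (rule sum.lessThan_Suc)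
      show ?thesis apply (subst s1) apply (subst s2) apply (subst s3) apply (subst s4) by (simp add: m)
    qed
    have sB: "(\<Sum>w\<in>Bwd arr (hd \<gamma>). Cpath f g (w # \<gamma>) t) = Cpath f g \<gamma> t * (In t (\<gamma> ! 0) / ?ff 0)"
    proof -
      have "Cpath f g (w # \<gamma>) t = Cpath f g \<gamma> t * (g t w (\<gamma> ! 0) / ?ff 0)" for w
      proof -
        have "plen (w # \<gamma>) \<ge> 1" using ne by (simp add: plen_Cons)
        then show ?thesis using Cpath_quot[OF n1] Cpath_quot[of "w # \<gamma>"]
          by (simp add: Pg_Cons[OF ne] Qf_Cons[OF n1 ne] mult.commute)
      qed
      then show ?thesis unfolding In_def hd by (simp add: sum_distrib_left sum_divide_distrib)
    qed
    have sF: "(\<Sum>y\<in>Fwd arr (last \<gamma>). Cpath f g (\<gamma> @ [y]) t) = Cpath f g \<gamma> t * (Out t (\<gamma> ! n) / ?ff n)"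
    proof -
      have "Cpath f g (\<gamma> @ [y]) t = Cpath f g \<gamma> t * (g t (\<gamma> ! n) y / ?ff n)" for y
      proof -
        have "plen (\<gamma> @ [y]) \<ge> 1" using ne by (simp add: plen_snoc)
        then show ?thesis using Cpath_quot[OF n1] Cpath_quot[of "\<gamma> @ [y]"]
          by (simp add: Pg_snoc[OF ne] Qf_snoc[OF n1 ne] n_def mult.commute)
      qed
      then show ?thesis unfolding Out_def lst by (simp add: sum_distrib_left sum_divide_distrib)
    qed
    show ?thesis using D unfolding tel sB sF Cpath_quot[OF n1, symmetric]
      by (simp add: right_diff_distrib)
  qed
qed

end


lemma supp_sum:
  assumes "finite S" "{p. \<pi> p \<noteq> 0} \<subseteq> S" "\<And>p. \<pi> p = 0 \<Longrightarrow> G p = 0"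
  shows "sum G {p. \<pi> p \<noteq> 0 \<and> Q p} = sum G {p\<in>S. Q p}"
  by (rule sum.mono_neutral_left) (use assms in auto)

lemma shift_sum:
  fixes F :: "nat \<Rightarrow> real"
  assumes "F k = F 0"
  shows "(\<Sum>i<k. F (Suc i)) = (\<Sum>i<k. F i)"
proof (cases k)
  case 0 then show ?thesis by simp
next
  case (Suc k')
  have "(\<Sum>i<Suc k'. F (Suc i)) = (\<Sum>i<k'. F (Suc i)) + F (Suc k')" by (rule sum.lessThan_Suc)
  moreover have "(\<Sum>i<Suc k'. F i) = F 0 + (\<Sum>i<k'. F (Suc i))" by (rule sum.lessThan_Suc_shift)
  ultimately show ?thesis using assms Suc by simp
qed

lemma count_sum:
  fixes c :: "nat \<Rightarrow> 'a \<times> 'b"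
  assumes "finite S" "\<And>i. i < k \<Longrightarrow> c i \<in> S"
  shows "(\<Sum>p\<in>{p\<in>S. P p}. (\<Sum>i<k. if p = c i then 1 else 0)) = (\<Sum>i<k. if P (c i) then 1 else (0::real))"
proof -
  have "(\<Sum>p\<in>{p\<in>S. P p}. (\<Sum>i<k. if p = c i then 1 else (0::real))) =
        (\<Sum>i<k. \<Sum>p\<in>{p\<in>S. P p}. if p = c i then 1 else 0)" by (rule sum.swap)
  also have "\<dots> = (\<Sum>i<k. if P (c i) then 1 else 0)"
    by (rule sum.cong) (use assms in \<open>auto simp: sum.delta'\<close>)
  finally show ?thesis .
qed

lemma tcost_nonneg: "coupling \<mu> \<nu> \<pi> \<Longrightarrow> tcost adj \<pi> \<ge> 0"
  unfolding tcost_def coupling_def by (auto intro: sum_nonneg)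

lemma W1_le: "coupling \<mu> \<nu> \<pi> \<Longrightarrow> W1 adj \<mu> \<nu> \<le> tcost adj \<pi>"
  unfolding W1_def
  by (rule cInf_lower) (auto intro: tcost_nonneg simp: bdd_below_def)

lemma cyc_mono:
  fixes a b :: "nat \<Rightarrow> 'v"
  assumes C: "\<And>i. i < k \<Longrightarrow> (a i, b i) \<in> Cset adj \<mu> \<nu>" and ak: "a k = a 0"
  shows "(\<Sum>i<k. real (gdist adj (a i) (b i))) \<le> (\<Sum>i<k. real (gdist adj (a (Suc i)) (b i)))"
proof (cases "k = 0")
  case True then show ?thesis by simp
next
  case False
  then have kpos: "real k > 0" by simp
  have "\<forall>i\<in>{..<k}. \<exists>\<pi>. \<pi> \<in> Pi1 adj \<mu> \<nu> \<and> \<pi> (a i, b i) > 0"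
    using C by (auto simp: Cset_def)
  then obtain P where P: "\<And>i. i < k \<Longrightarrow> P i \<in> Pi1 adj \<mu> \<nu> \<and> P i (a i, b i) > 0"
    by (metis bchoice lessThan_iff)
  have Pc: "\<And>i. i < k \<Longrightarrow> coupling \<mu> \<nu> (P i)" and Pt: "\<And>i. i < k \<Longrightarrow> tcost adj (P i) = W1 adj \<mu> \<nu>"
    using P by (auto simp: Pi1_def)
  define d where "d p = real (gdist adj (fst p) (snd p))" for p
  define S where "S = (\<Union>i<k. {p. P i p \<noteq> 0}) \<union> (\<lambda>i. (a i, b i)) ` {..<k} \<union> (\<lambda>i. (a (Suc i), b i)) ` {..<k}"
  have finS: "finite S" unfolding S_def using Pc by (auto simp: coupling_def)
  have suppS: "\<And>i. i < k \<Longrightarrow> {p. P i p \<noteq> 0} \<subseteq> S" unfolding S_def by auto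
  define m0 where "m0 = Min ((\<lambda>i. P i (a i, b i)) ` {..<k})"
  have m0pos: "m0 > 0" unfolding m0_def using P False by (subst Min_gr_iff) auto
  have m0le: "\<And>i. i < k \<Longrightarrow> m0 \<le> P i (a i, b i)" unfolding m0_def by (auto intro: Min_le)
  define \<epsilon> where "\<epsilon> = m0 / (real k * real k)"
  have epos: "\<epsilon> > 0" unfolding \<epsilon>_def using m0pos kpos by simp
  define \<sigma> where "\<sigma> p = (\<Sum>i<k. P i p) / real k" for p
  define i1 where "i1 p = (\<Sum>i<k. if p = (a i, b i) then 1 else (0::real))" for p
  define i2 where "i2 p = (\<Sum>i<k. if p = (a (Suc i), b i) then 1 else (0::real))" for p
  define \<pi> where "\<pi> p = \<sigma> p - \<epsilon> * i1 p + \<epsilon> * i2 p" for p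
  have Pnn: "\<And>i p. i < k \<Longrightarrow> P i p \<ge> 0" using Pc by (auto simp: coupling_def)
  have snn: "\<sigma> p \<ge> 0" for p unfolding \<sigma>_def by (intro divide_nonneg_nonneg sum_nonneg) (auto intro: Pnn)
  have i1nn: "i1 p \<ge> 0" and i2nn: "i2 p \<ge> 0" for p unfolding i1_def i2_def by (auto intro: sum_nonneg)
  have i1le: "i1 p \<le> real k" for p
  proof -
    have "i1 p \<le> (\<Sum>i<k. 1)" unfolding i1_def by (rule sum_mono) auto
    then show ?thesis by simp
  qed
  have pinn: "\<pi> p \<ge> 0" for p
  proof (cases "i1 p = 0")
    case True then show ?thesis unfolding \<pi>_def using snn[of p] i2nn[of p] epos by simp
  next
    case False
    have "\<exists>j<k. p = (a j, b j)"
    proof (rule ccontr)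
      assume "\<not> (\<exists>j<k. p = (a j, b j))"
      then have "i1 p = 0" unfolding i1_def by (auto intro!: sum.neutral)
      with False show False by simp
    qed
    then obtain j where j: "j < k" "p = (a j, b j)" by blast
    have "P j p \<le> (\<Sum>i<k. P i p)" by (rule member_le_sum) (use j Pnn in auto)
    then have "m0 / real k \<le> \<sigma> p" unfolding \<sigma>_def using m0le[of j] j kpos
      by (simp add: divide_right_mono)
    moreover have "\<epsilon> * i1 p \<le> \<epsilon> * real k" using i1le epos by simp
    moreover have "\<epsilon> * real k = m0 / real k" unfolding \<epsilon>_def using kpos by simp
    moreover have "\<epsilon> * i2 p \<ge> 0" using epos i2nn[of p] by simp
    ultimately show ?thesis unfolding \<pi>_def by linarith
  qed
  have pi0: "\<pi> p = 0" if "p \<notin> S" for p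
  proof -
    have "P i p = 0" if "i < k" for i using that \<open>p \<notin> S\<close> unfolding S_def by auto
    moreover have "i1 p = 0" "i2 p = 0" unfolding i1_def i2_def using \<open>p \<notin> S\<close> unfolding S_def
      by (auto intro!: sum.neutral)
    ultimately show ?thesis unfolding \<pi>_def \<sigma>_def by simp
  qed
  have suppPi: "{p. \<pi> p \<noteq> 0} \<subseteq> S" using pi0 by blast
  have aS: "\<And>i. i < k \<Longrightarrow> (a i, b i) \<in> S" and a2S: "\<And>i. i < k \<Longrightarrow> (a (Suc i), b i) \<in> S"
    unfolding S_def by auto
  have sig_sum: "(\<Sum>p\<in>{p\<in>S. Q p}. G p * \<sigma> p) = (\<Sum>i<k. \<Sum>p\<in>{p\<in>S. Q p}. G p * P i p) / real k" for Q G
  proof -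
    have "(\<Sum>p\<in>{p\<in>S. Q p}. G p * \<sigma> p) = (\<Sum>p\<in>{p\<in>S. Q p}. \<Sum>i<k. G p * P i p) / real k"
      unfolding \<sigma>_def by (simp add: sum_divide_distrib sum_distrib_left)
    also have "\<dots> = (\<Sum>i<k. \<Sum>p\<in>{p\<in>S. Q p}. G p * P i p) / real k"
      by (subst sum.swap) (rule refl)
    finally show ?thesis .
  qed
  have Psum: "(\<Sum>p\<in>{p. P i p \<noteq> 0 \<and> Q p}. G p * P i p) = (\<Sum>p\<in>{p\<in>S. Q p}. G p * P i p)" if "i < k" for i Q G
    by (rule supp_sum[OF finS suppS[OF that]]) simp
  have marg1: "(\<Sum>p\<in>{p\<in>S. fst p = x}. \<pi> p) = \<mu> x" for x
  proof -
    have "(\<Sum>p\<in>{p\<in>S. fst p = x}. \<pi> p) = (\<Sum>p\<in>{p\<in>S. fst p = x}. 1 * \<sigma> p)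
        - \<epsilon> * (\<Sum>p\<in>{p\<in>S. fst p = x}. i1 p) + \<epsilon> * (\<Sum>p\<in>{p\<in>S. fst p = x}. i2 p)"
      unfolding \<pi>_def by (simp add: sum.distrib sum_subtractf sum_distrib_left)
    also have "(\<Sum>p\<in>{p\<in>S. fst p = x}. 1 * \<sigma> p) = \<mu> x"
    proof -
      have "(\<Sum>p\<in>{p\<in>S. fst p = x}. 1 * P i p) = \<mu> x" if "i < k" for i
        using Psum[OF that, where Q="\<lambda>p. fst p = x" and G="\<lambda>_. 1"] Pc[OF that] by (simp add: coupling_def)
      then show ?thesis unfolding sig_sum using kpos by simp
    qed
    also have "(\<Sum>p\<in>{p\<in>S. fst p = x}. i1 p) = (\<Sum>i<k. if a i = x then 1 else 0)"
      unfolding i1_def by (subst count_sum[OF finS]) (use aS in auto)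
    also have "(\<Sum>p\<in>{p\<in>S. fst p = x}. i2 p) = (\<Sum>i<k. if a (Suc i) = x then 1 else 0)"
      unfolding i2_def by (subst count_sum[OF finS]) (use a2S in auto)
    also have "\<dots> = (\<Sum>i<k. if a i = x then 1 else 0)"
      by (rule shift_sum[where F = "\<lambda>i. if a i = x then 1 else 0"]) (simp add: ak)
    finally show ?thesis by simp
  qed
  have marg2: "(\<Sum>p\<in>{p\<in>S. snd p = y}. \<pi> p) = \<nu> y" for y
  proof -
    have "(\<Sum>p\<in>{p\<in>S. snd p = y}. \<pi> p) = (\<Sum>p\<in>{p\<in>S. snd p = y}. 1 * \<sigma> p)
        - \<epsilon> * (\<Sum>p\<in>{p\<in>S. snd p = y}. i1 p) + \<epsilon> * (\<Sum>p\<in>{p\<in>S. snd p = y}. i2 p)"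
      unfolding \<pi>_def by (simp add: sum.distrib sum_subtractf sum_distrib_left)
    also have "(\<Sum>p\<in>{p\<in>S. snd p = y}. 1 * \<sigma> p) = \<nu> y"
    proof -
      have "(\<Sum>p\<in>{p\<in>S. snd p = y}. 1 * P i p) = \<nu> y" if "i < k" for i
        using Psum[OF that, where Q="\<lambda>p. snd p = y" and G="\<lambda>_. 1"] Pc[OF that] by (simp add: coupling_def)
      then show ?thesis unfolding sig_sum using kpos by simp
    qed
    also have "(\<Sum>p\<in>{p\<in>S. snd p = y}. i1 p) = (\<Sum>i<k. if b i = y then 1 else 0)"
      unfolding i1_def by (subst count_sum[OF finS]) (use aS in auto)
    also have "(\<Sum>p\<in>{p\<in>S. snd p = y}. i2 p) = (\<Sum>i<k. if b i = y then 1 else 0)"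
      unfolding i2_def by (subst count_sum[OF finS]) (use a2S in auto)
    finally show ?thesis by simp
  qed
  have cpl: "coupling \<mu> \<nu> \<pi>"
    unfolding coupling_def
  proof (intro conjI allI)
    show "finite {p. \<pi> p \<noteq> 0}" using finS suppPi by (rule finite_subset[rotated])
    show "0 \<le> \<pi> p" for p by (rule pinn)
    show "\<mu> x = (\<Sum>p\<in>{p. \<pi> p \<noteq> 0 \<and> fst p = x}. \<pi> p)" for x
      using supp_sum[OF finS suppPi, of "\<lambda>p. \<pi> p" "\<lambda>p. fst p = x"] marg1[of x] by simp
    show "\<nu> y = (\<Sum>p\<in>{p. \<pi> p \<noteq> 0 \<and> snd p = y}. \<pi> p)" for y
      using supp_sum[OF finS suppPi, of "\<lambda>p. \<pi> p" "\<lambda>p. snd p = y"] marg2[of y] by simp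
  qed
  have cost: "tcost adj \<pi> = W1 adj \<mu> \<nu> - \<epsilon> * (\<Sum>i<k. real (gdist adj (a i) (b i)))
                + \<epsilon> * (\<Sum>i<k. real (gdist adj (a (Suc i)) (b i)))"
  proof -
    have "tcost adj \<pi> = (\<Sum>p\<in>{p\<in>S. True}. d p * \<pi> p)"
      unfolding tcost_def d_def[symmetric] using supp_sum[OF finS suppPi, of "\<lambda>p. d p * \<pi> p" "\<lambda>_. True"] by simp
    also have "\<dots> = (\<Sum>p\<in>{p\<in>S. True}. d p * \<sigma> p) - \<epsilon> * (\<Sum>p\<in>{p\<in>S. True}. d p * i1 p)
        + \<epsilon> * (\<Sum>p\<in>{p\<in>S. True}. d p * i2 p)"
      unfolding \<pi>_def by (simp add: sum.distrib sum_subtractf sum_distrib_left algebra_simps)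
    also have "(\<Sum>p\<in>{p\<in>S. True}. d p * \<sigma> p) = W1 adj \<mu> \<nu>"
    proof -
      have "(\<Sum>p\<in>{p\<in>S. True}. d p * P i p) = W1 adj \<mu> \<nu>" if "i < k" for i
        using Psum[OF that, where Q="\<lambda>_. True" and G=d] Pt[OF that] by (simp add: tcost_def d_def)
      then show ?thesis unfolding sig_sum using kpos by simp
    qed
    also have "(\<Sum>p\<in>{p\<in>S. True}. d p * i1 p) = (\<Sum>i<k. real (gdist adj (a i) (b i)))"
    proof -
      have "(\<Sum>p\<in>{p\<in>S. True}. d p * i1 p) = (\<Sum>i<k. \<Sum>p\<in>S. if p = (a i, b i) then d p else 0)"
      proof -
        have "(\<Sum>p\<in>{p\<in>S. True}. d p * i1 p) = (\<Sum>p\<in>S. \<Sum>i<k. if p = (a i, b i) then d p else 0)"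
          unfolding i1_def sum_distrib_left by (auto intro!: sum.cong)
        also have "\<dots> = (\<Sum>i<k. \<Sum>p\<in>S. if p = (a i, b i) then d p else 0)"
          by (rule sum.swap)
        finally show ?thesis .
      qed
      also have "\<dots> = (\<Sum>i<k. d (a i, b i))" by (rule sum.cong) (use aS finS in \<open>auto simp: sum.delta\<close>)
      finally show ?thesis by (simp add: d_def)
    qed
    also have "(\<Sum>p\<in>{p\<in>S. True}. d p * i2 p) = (\<Sum>i<k. real (gdist adj (a (Suc i)) (b i)))"
    proof -
      have "(\<Sum>p\<in>{p\<in>S. True}. d p * i2 p) = (\<Sum>i<k. \<Sum>p\<in>S. if p = (a (Suc i), b i) then d p else 0)"
      proof -
        have "(\<Sum>p\<in>{p\<in>S. True}. d p * i2 p) = (\<Sum>p\<in>S. \<Sum>i<k. if p = (a (Suc i), b i) then d p else 0)"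
          unfolding i2_def sum_distrib_left by (auto intro!: sum.cong)
        also have "\<dots> = (\<Sum>i<k. \<Sum>p\<in>S. if p = (a (Suc i), b i) then d p else 0)"
          by (rule sum.swap)
        finally show ?thesis .
      qed
      also have "\<dots> = (\<Sum>i<k. d (a (Suc i), b i))" by (rule sum.cong) (use a2S finS in \<open>auto simp: sum.delta\<close>)
      finally show ?thesis by (simp add: d_def)
    qed
    finally show ?thesis .
  qed
  have "W1 adj \<mu> \<nu> \<le> tcost adj \<pi>" by (rule W1_le[OF cpl])
  then have "\<epsilon> * (\<Sum>i<k. real (gdist adj (a i) (b i))) \<le> \<epsilon> * (\<Sum>i<k. real (gdist adj (a (Suc i)) (b i)))"
    unfolding cost by simp
  then show ?thesis using epos by simp
qed



lemma walk_take: assumes "walk adj \<Gamma>" "m < length \<Gamma>"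
  shows "walk adj (take (Suc m) \<Gamma>) \<and> hd (take (Suc m) \<Gamma>) = hd \<Gamma> \<and> last (take (Suc m) \<Gamma>) = \<Gamma> ! m
     \<and> plen (take (Suc m) \<Gamma>) = m"
proof -
  have l: "length (take (Suc m) \<Gamma>) = Suc m" using assms(2) by simp
  show ?thesis using assms l by (auto simp: walk_def plen_def hd_conv_nth last_conv_nth)
qed

lemma walk_drop: assumes "walk adj \<Gamma>" "j < length \<Gamma>"
  shows "walk adj (drop j \<Gamma>) \<and> hd (drop j \<Gamma>) = \<Gamma> ! j \<and> last (drop j \<Gamma>) = last \<Gamma>
     \<and> plen (drop j \<Gamma>) = plen \<Gamma> - j"
  using assms by (auto simp: walk_def plen_def hd_drop_conv_nth last_drop add.assoc[symmetric])

lemma walk_app: assumes "walk adj xs" "walk adj ys" "last xs = hd ys"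
  shows "walk adj (xs @ tl ys) \<and> hd (xs @ tl ys) = hd xs \<and> last (xs @ tl ys) = last ys
     \<and> plen (xs @ tl ys) = plen xs + plen ys"
proof -
  have xne: "xs \<noteq> []" and yne: "ys \<noteq> []" using assms by (auto simp: walk_def)
  have ax: "\<And>i. i + 1 < length xs \<Longrightarrow> adj (xs ! i) (xs ! (i + 1))"
   and ay: "\<And>i. i + 1 < length ys \<Longrightarrow> adj (ys ! i) (ys ! (i + 1))" using assms by (auto simp: walk_def)
  have lx: "xs ! (length xs - 1) = ys ! 0" using assms(3) xne yne by (simp add: last_conv_nth hd_conv_nth)
  have w: "adj ((xs @ tl ys) ! i) ((xs @ tl ys) ! (i + 1))" if "i + 1 < length (xs @ tl ys)" for i
  proof -
    consider "i + 1 < length xs" | "i + 1 = length xs" | "i + 1 > length xs" by linarith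
    then show ?thesis
    proof cases
      case 1 then show ?thesis using ax by (simp add: nth_append)
    next
      case 2
      then have "i = length xs - 1" by simp
      then have "(xs @ tl ys) ! i = ys ! 0" using lx xne by (simp add: nth_append)
      moreover have "(xs @ tl ys) ! (i + 1) = ys ! 1" using 2 that by (simp add: nth_append nth_tl)
      moreover have "1 < length ys" using 2 that by simp
      ultimately show ?thesis using ay[of 0] by simp
    next
      case 3
      then have e: "Suc i - length xs = Suc (i - length xs)" by simp
      from 3 have "(xs @ tl ys) ! i = ys ! (i - length xs + 1)" "(xs @ tl ys) ! (i + 1) = ys ! (i - length xs + 2)"
        using that e by (auto simp: nth_append nth_tl)
      moreover have "i - length xs + 1 + 1 < length ys" using 3 that by simp
      ultimately show ?thesis using ay[of "i - length xs + 1"] by (simp add: numeral_2_eq_2)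
    qed
  qed
  have "last (xs @ tl ys) = last ys"
    using assms(3) yne by (cases ys) (auto)
  moreover have "length xs \<ge> 1" "length ys \<ge> 1" using xne yne by (auto simp: Suc_le_eq)
  ultimately show ?thesis using xne yne w
    by (auto simp: walk_def plen_def)
qed

lemma gdist_le: "walk adj \<gamma> \<Longrightarrow> gdist adj (hd \<gamma>) (last \<gamma>) \<le> plen \<gamma>"
  unfolding gdist_def by (rule Least_le) blast

lemma splice:
  assumes "walk adj \<Gamma>" "walk adj \<Gamma>'" "Suc k < length \<Gamma>" "m < length \<Gamma>'" "\<Gamma>' ! m = \<Gamma> ! Suc k"
  shows "gdist adj (hd \<Gamma>') (last \<Gamma>) \<le> m + (plen \<Gamma> - Suc k)"
proof -
  note T = walk_take[OF assms(2,4)] and D = walk_drop[OF assms(1,3)]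
  have "walk adj (take (Suc m) \<Gamma>' @ tl (drop (Suc k) \<Gamma>)) \<and> hd (take (Suc m) \<Gamma>' @ tl (drop (Suc k) \<Gamma>)) = hd \<Gamma>'
     \<and> last (take (Suc m) \<Gamma>' @ tl (drop (Suc k) \<Gamma>)) = last \<Gamma>
     \<and> plen (take (Suc m) \<Gamma>' @ tl (drop (Suc k) \<Gamma>)) = m + (plen \<Gamma> - Suc k)"
    using walk_app[of adj "take (Suc m) \<Gamma>'" "drop (Suc k) \<Gamma>"] T D assms(5) by auto
  then show ?thesis using gdist_le[of adj "take (Suc m) \<Gamma>' @ tl (drop (Suc k) \<Gamma>)"] by simp
qed



context geo begin

abbreviation "CS \<equiv> Cset adj (f 0) (f 1)"

lemma fp0: "fin_prob (f 0)" and fp1: "fin_prob (f 1)"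
  using geo by (auto simp: W1plus_geodesic_def)

lemma Cset_fin: "finite CS"
proof -
  have "CS \<subseteq> {x. f 0 x \<noteq> 0} \<times> {y. f 1 y \<noteq> 0}"
  proof
    fix q assume "q \<in> CS"
    obtain x y where q: "q = (x, y)" by (cases q)
    with \<open>q \<in> CS\<close> obtain \<pi> where \<pi>: "\<pi> \<in> Pi1 adj (f 0) (f 1)" "\<pi> (x, y) > 0"
      by (auto simp: Cset_def)
    then have c: "coupling (f 0) (f 1) \<pi>" by (simp add: Pi1_def)
    have fin: "finite {p. \<pi> p \<noteq> 0}" and nn: "\<And>p. \<pi> p \<ge> 0" using c by (auto simp: coupling_def)
    have "\<pi> (x, y) \<le> (\<Sum>p\<in>{p. \<pi> p \<noteq> 0 \<and> fst p = x}. \<pi> p)"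
      by (rule member_le_sum) (use \<pi> nn fin in auto)
    moreover have "\<pi> (x, y) \<le> (\<Sum>p\<in>{p. \<pi> p \<noteq> 0 \<and> snd p = y}. \<pi> p)"
      by (rule member_le_sum) (use \<pi> nn fin in auto)
    ultimately have "f 0 x > 0" "f 1 y > 0" using c \<pi> unfolding coupling_def by (metis less_le_trans)+
    then show "q \<in> {x. f 0 x \<noteq> 0} \<times> {y. f 1 y \<noteq> 0}" using q by simp
  qed
  moreover have "finite ({x. f 0 x \<noteq> 0} \<times> {y. f 1 y \<noteq> 0})"
    using fp0 fp1 by (simp add: fin_prob_def)
  ultimately show ?thesis by (rule finite_subset)
qed

lemma chain:
  assumes H: "\<And>i. i < n \<Longrightarrow> geodesic adj (\<Gamma> i) \<and> (hd (\<Gamma> i), last (\<Gamma> i)) \<in> CS \<and>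
         Suc (K i) < length (\<Gamma> i) \<and> \<Gamma> i ! K i = x i \<and> \<Gamma> i ! Suc (K i) = x (Suc i)"
    and jl: "j < l" "l < n" and hdq: "hd (\<Gamma> j) = hd (\<Gamma> l)"
  shows "K j + (l - j) \<le> K l"
proof -
  define c where "c = l - j"
  define a' where "a' i = hd (\<Gamma> (j + i))" for i
  define b' where "b' i = last (\<Gamma> (j + i))" for i
  have lc: "l = j + c" using jl c_def by simp
  have cyc: "(\<Sum>i<c. real (gdist adj (a' i) (b' i))) \<le> (\<Sum>i<c. real (gdist adj (a' (Suc i)) (b' i)))"
    by (rule cyc_mono[where \<mu>="f 0" and \<nu>="f 1"]) (use H jl lc in \<open>auto simp: a'_def b'_def hdq\<close>)
  have t1: "real (gdist adj (a' i) (b' i)) = real (plen (\<Gamma> (j + i)))" if "i < c" for i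
    using H[of "j + i"] that lc jl by (simp add: a'_def b'_def geodesic_def)
  have t2: "real (gdist adj (a' (Suc i)) (b' i)) \<le>
      real (K (j + Suc i)) + real (plen (\<Gamma> (j + i))) - real (K (j + i)) - 1" if "i < c" for i
  proof -
    have h1: "geodesic adj (\<Gamma> (j + i)) \<and> Suc (K (j + i)) < length (\<Gamma> (j + i)) \<and> \<Gamma> (j + i) ! Suc (K (j + i)) = x (Suc (j + i))"
      using H[of "j + i"] that lc jl by simp
    have h2: "geodesic adj (\<Gamma> (j + Suc i)) \<and> Suc (K (j + Suc i)) < length (\<Gamma> (j + Suc i)) \<and> \<Gamma> (j + Suc i) ! K (j + Suc i) = x (j + Suc i)"
      using H[of "j + Suc i"] that lc jl by simp
    have "gdist adj (hd (\<Gamma> (j + Suc i))) (last (\<Gamma> (j + i))) \<le> K (j + Suc i) + (plen (\<Gamma> (j + i)) - Suc (K (j + i)))"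
      by (rule splice) (use h1 h2 in \<open>auto simp: geodesic_def\<close>)
    moreover have "Suc (K (j + i)) \<le> plen (\<Gamma> (j + i))" using h1 unfolding plen_def by linarith
    ultimately show ?thesis unfolding a'_def b'_def by (simp add: of_nat_diff)
  qed
  have "(\<Sum>i<c. real (plen (\<Gamma> (j + i)))) \<le>
        (\<Sum>i<c. real (K (j + Suc i)) + real (plen (\<Gamma> (j + i))) - real (K (j + i)) - 1)"
  proof -
    have "(\<Sum>i<c. real (plen (\<Gamma> (j + i)))) = (\<Sum>i<c. real (gdist adj (a' i) (b' i)))"
      by (rule sum.cong) (use t1 in auto)
    also have "\<dots> \<le> (\<Sum>i<c. real (gdist adj (a' (Suc i)) (b' i)))" by (rule cyc)
    also have "\<dots> \<le> (\<Sum>i<c. real (K (j + Suc i)) + real (plen (\<Gamma> (j + i))) - real (K (j + i)) - 1)"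
      by (rule sum_mono) (use t2 in auto)
    finally show ?thesis .
  qed
  also have "\<dots> = (\<Sum>i<c. (real (K (j + Suc i)) - real (K (j + i))) + (real (plen (\<Gamma> (j + i))) - 1))"
    by (rule sum.cong) auto
  also have "\<dots> = (\<Sum>i<c. real (K (j + Suc i)) - real (K (j + i))) + (\<Sum>i<c. real (plen (\<Gamma> (j + i))) - 1)"
    by (rule sum.distrib)
  also have "(\<Sum>i<c. real (plen (\<Gamma> (j + i))) - 1) = (\<Sum>i<c. real (plen (\<Gamma> (j + i)))) - real c"
    by (simp add: sum_subtractf)
  also have "(\<Sum>i<c. real (K (j + Suc i)) - real (K (j + i))) = real (K (j + c)) - real (K j)"
    using sum_lessThan_telescope[of "\<lambda>i. real (K (j + i))" c] by simp
  finally have "real (K j) + real c \<le> real (K (j + c))" by linarith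
  then have "K j + c \<le> K (j + c)" by linarith
  then show ?thesis using jl(1) by (simp add: c_def)
qed

lemma path_bound: "\<exists>B. \<forall>\<gamma>. oriented_path arr \<gamma> \<longrightarrow> plen \<gamma> \<le> B"
proof -
  define D where "D = Max ((\<lambda>q. gdist adj (fst q) (snd q)) ` CS)"
  have "plen \<gamma> \<le> card CS * Suc D" if op: "oriented_path arr \<gamma>" for \<gamma>
  proof -
    define n where "n = plen \<gamma>"
    define x where "x i = \<gamma> ! i" for i
    have ne: "\<gamma> \<noteq> []" using op by (simp add: oriented_path_def)
    have ex: "\<forall>i. \<exists>p. i < n \<longrightarrow> geodesic adj (fst p) \<and> (hd (fst p), last (fst p)) \<in> CS \<and>
         Suc (snd p) < length (fst p) \<and> fst p ! snd p = x i \<and> fst p ! Suc (snd p) = x (Suc i)"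
    proof (intro allI)
      fix i
      show "\<exists>p. i < n \<longrightarrow> geodesic adj (fst p) \<and> (hd (fst p), last (fst p)) \<in> CS \<and>
         Suc (snd p) < length (fst p) \<and> fst p ! snd p = x i \<and> fst p ! Suc (snd p) = x (Suc i)"
      proof (cases "i < n")
        case True
        then have "arr (x i) (x (Suc i))" using op ne unfolding oriented_path_def x_def n_def plen_def by auto
        then obtain G k where "geodesic adj G \<and> (hd G, last G) \<in> CS \<and>
         Suc k < length G \<and> G ! k = x i \<and> G ! Suc k = x (Suc i)" unfolding W1_orient_def by auto
        then show ?thesis by (intro exI[of _ "(G, k)"]) simp
      qed simp
    qed
    obtain GK where GK: "\<forall>i. i < n \<longrightarrow> geodesic adj (fst (GK i)) \<and> (hd (fst (GK i)), last (fst (GK i))) \<in> CS \<and>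
         Suc (snd (GK i)) < length (fst (GK i)) \<and> fst (GK i) ! snd (GK i) = x i \<and> fst (GK i) ! Suc (snd (GK i)) = x (Suc i)"
      using choice[OF ex] by blast
    define \<Gamma> where "\<Gamma> i = fst (GK i)" for i
    define K where "K i = snd (GK i)" for i
    have H: "\<And>i. i < n \<Longrightarrow> geodesic adj (\<Gamma> i) \<and> (hd (\<Gamma> i), last (\<Gamma> i)) \<in> CS \<and>
         Suc (K i) < length (\<Gamma> i) \<and> \<Gamma> i ! K i = x i \<and> \<Gamma> i ! Suc (K i) = x (Suc i)"
      using GK unfolding \<Gamma>_def K_def by blast
    define I where "I q = {i. i < n \<and> (hd (\<Gamma> i), last (\<Gamma> i)) = q}" for q
    have cardI: "card (I q) \<le> Suc D" if q: "q \<in> CS" for q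
    proof (cases "I q = {}")
      case True then show ?thesis by simp
    next
      case False
      have finI: "finite (I q)" unfolding I_def by simp
      define m where "m = Min (I q)"
      have mI: "m \<in> I q" using finI False m_def by simp
      have "I q \<subseteq> {m..m + D}"
      proof
        fix i assume i: "i \<in> I q"
        have "m \<le> i" using finI i m_def by simp
        moreover have "i \<le> m + D"
        proof (cases "m = i")
          case True then show ?thesis by simp
        next
          case False
          with \<open>m \<le> i\<close> have mi: "m < i" by simp
          have "K m + (i - m) \<le> K i"
            by (rule chain[where \<Gamma>=\<Gamma> and K=K and x=x and n=n]) (use H mi i mI in \<open>auto simp: I_def\<close>)
          moreover have "K i < plen (\<Gamma> i)" using H[of i] i by (auto simp: I_def plen_def)
          moreover have "plen (\<Gamma> i) = gdist adj (fst q) (snd q)"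
            using H[of i] i by (auto simp: I_def geodesic_def)
          moreover have "gdist adj (fst q) (snd q) \<le> D"
            unfolding D_def using q Cset_fin by (auto intro: Max_ge)
          ultimately show ?thesis by linarith
        qed
        ultimately show "i \<in> {m..m + D}" by simp
      qed
      then have "card (I q) \<le> card {m..m + D}" by (rule card_mono[rotated]) simp
      then show ?thesis by simp
    qed
    have "{..<n} \<subseteq> (\<Union>q\<in>CS. I q)" using H unfolding I_def by auto
    moreover have "finite (\<Union>q\<in>CS. I q)" using Cset_fin unfolding I_def by auto
    ultimately have "card {..<n} \<le> card (\<Union>q\<in>CS. I q)" by (intro card_mono)
    then have "n \<le> card (\<Union>q\<in>CS. I q)" by simp
    also have "\<dots> \<le> (\<Sum>q\<in>CS. card (I q))" by (rule card_UN_le[OF Cset_fin])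
    also have "\<dots> \<le> (\<Sum>q\<in>CS. Suc D)" by (rule sum_mono) (rule cardI)
    finally show ?thesis by (simp add: n_def)
  qed
  then show ?thesis by blast
qed

end


lemma op_single: "oriented_path arr [x]" by (simp add: oriented_path_def)

lemma op_Cons: "oriented_path arr \<gamma> \<Longrightarrow> arr x (hd \<gamma>) \<Longrightarrow> oriented_path arr (x # \<gamma>)"
  unfolding oriented_path_def
  by (auto simp: nth_Cons hd_conv_nth split: nat.splits)

lemma op_snoc: "oriented_path arr \<gamma> \<Longrightarrow> arr (last \<gamma>) z \<Longrightarrow> oriented_path arr (\<gamma> @ [z])"
  unfolding oriented_path_def
proof (intro conjI allI impI)
  fix i assume a: "\<gamma> \<noteq> [] \<and> (\<forall>i. i + 1 < length \<gamma> \<longrightarrow> arr (\<gamma> ! i) (\<gamma> ! (i + 1)))"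
    "arr (last \<gamma>) z" "i + 1 < length (\<gamma> @ [z])"
  show "arr ((\<gamma> @ [z]) ! i) ((\<gamma> @ [z]) ! (i + 1))"
  proof (cases "i + 1 < length \<gamma>")
    case True then show ?thesis using a by (simp add: nth_append)
  next
    case False
    then have "i = length \<gamma> - 1" using a by simp
    then show ?thesis using a by (simp add: nth_append last_conv_nth)
  qed
qed simp

context geo begin

definition hgt :: "'v \<Rightarrow> nat" where
  "hgt x = Max {plen \<gamma> | \<gamma>. oriented_path arr \<gamma> \<and> hd \<gamma> = x}"
definition dep :: "'v \<Rightarrow> nat" where
  "dep x = Max {plen \<gamma> | \<gamma>. oriented_path arr \<gamma> \<and> last \<gamma> = x}"

lemma fin_lens: "finite {plen \<gamma> | \<gamma>. oriented_path arr \<gamma> \<and> P \<gamma>}"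
proof -
  obtain B where B: "\<And>\<gamma>. oriented_path arr \<gamma> \<Longrightarrow> plen \<gamma> \<le> B" using path_bound by blast
  have "{plen \<gamma> | \<gamma>. oriented_path arr \<gamma> \<and> P \<gamma>} \<subseteq> {..B}" using B by auto
  then show ?thesis by (rule finite_subset) simp
qed

lemma hgt_attain: "\<exists>\<gamma>. oriented_path arr \<gamma> \<and> hd \<gamma> = x \<and> plen \<gamma> = hgt x"
proof -
  have "[x] \<in> {\<gamma>. oriented_path arr \<gamma> \<and> hd \<gamma> = x}" by (simp add: op_single)
  then have "{plen \<gamma> | \<gamma>. oriented_path arr \<gamma> \<and> hd \<gamma> = x} \<noteq> {}" by blast
  from Max_in[OF fin_lens this] show ?thesis unfolding hgt_def by auto
qed

lemma hgt_ge: "oriented_path arr \<gamma> \<Longrightarrow> hd \<gamma> = x \<Longrightarrow> plen \<gamma> \<le> hgt x"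
  unfolding hgt_def by (rule Max_ge[OF fin_lens]) blast

lemma dep_attain: "\<exists>\<gamma>. oriented_path arr \<gamma> \<and> last \<gamma> = x \<and> plen \<gamma> = dep x"
proof -
  have "[x] \<in> {\<gamma>. oriented_path arr \<gamma> \<and> last \<gamma> = x}" by (simp add: op_single)
  then have "{plen \<gamma> | \<gamma>. oriented_path arr \<gamma> \<and> last \<gamma> = x} \<noteq> {}" by blast
  from Max_in[OF fin_lens this] show ?thesis unfolding dep_def by auto
qed

lemma dep_ge: "oriented_path arr \<gamma> \<Longrightarrow> last \<gamma> = x \<Longrightarrow> plen \<gamma> \<le> dep x"
  unfolding dep_def by (rule Max_ge[OF fin_lens]) blast

lemma hgt_Fwd: assumes "arr x y" shows "hgt y < hgt x"
proof -
  obtain \<gamma> where g: "oriented_path arr \<gamma>" "hd \<gamma> = y" "plen \<gamma> = hgt y" using hgt_attain by blast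
  have ne: "\<gamma> \<noteq> []" using g by (simp add: oriented_path_def)
  have "oriented_path arr (x # \<gamma>)" using op_Cons[OF g(1)] g(2) assms by simp
  then have "plen (x # \<gamma>) \<le> hgt x" by (rule hgt_ge) simp
  then show ?thesis using g ne by (simp add: plen_Cons)
qed

lemma dep_Bwd: assumes "arr w x" shows "dep w < dep x"
proof -
  obtain \<gamma> where g: "oriented_path arr \<gamma>" "last \<gamma> = w" "plen \<gamma> = dep w" using dep_attain by blast
  have ne: "\<gamma> \<noteq> []" using g by (simp add: oriented_path_def)
  have "oriented_path arr (\<gamma> @ [x])" using op_snoc[OF g(1)] g(2) assms by simp
  then have "plen (\<gamma> @ [x]) \<le> dep x" by (rule dep_ge) simp
  then show ?thesis using g ne by (simp add: plen_snoc)
qed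

lemma hgt_SEG2: "enat (hgt x) \<le> (SUP \<gamma>'\<in>SEG2 arr x. enat (plen \<gamma>'))"
proof -
  obtain \<gamma> where g: "oriented_path arr \<gamma>" "hd \<gamma> = x" "plen \<gamma> = hgt x" using hgt_attain by blast
  have ne: "\<gamma> \<noteq> []" using g by (simp add: oriented_path_def)
  have "last \<gamma> \<in> Bset arr"
  proof (rule ccontr)
    assume "last \<gamma> \<notin> Bset arr"
    then obtain z where z: "arr (last \<gamma>) z" by (auto simp: Bset_def Fwd_def)
    have "oriented_path arr (\<gamma> @ [z])" by (rule op_snoc[OF g(1) z])
    then have "plen (\<gamma> @ [z]) \<le> hgt x" by (rule hgt_ge) (use g ne in simp)
    then show False using g ne by (simp add: plen_snoc)
  qed
  then have "\<gamma> \<in> SEG2 arr x" using g by (simp add: SEG2_def)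
  then have "enat (plen \<gamma>) \<le> (SUP \<gamma>'\<in>SEG2 arr x. enat (plen \<gamma>'))" by (rule SUP_upper)
  then show ?thesis using g by simp
qed

lemma dep_SEG1: "enat (dep x) \<le> (SUP \<gamma>'\<in>SEG1 arr x. enat (plen \<gamma>'))"
proof -
  obtain \<gamma> where g: "oriented_path arr \<gamma>" "last \<gamma> = x" "plen \<gamma> = dep x" using dep_attain by blast
  have ne: "\<gamma> \<noteq> []" using g by (simp add: oriented_path_def)
  have "hd \<gamma> \<in> Aset arr"
  proof (rule ccontr)
    assume "hd \<gamma> \<notin> Aset arr"
    then obtain w where w: "arr w (hd \<gamma>)" by (auto simp: Aset_def Bwd_def)
    have "oriented_path arr (w # \<gamma>)" by (rule op_Cons[OF g(1) w])
    then have "plen (w # \<gamma>) \<le> dep x" by (rule dep_ge) (use g ne in simp)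
    then show False using g ne by (simp add: plen_Cons)
  qed
  then have "\<gamma> \<in> SEG1 arr x" using g by (simp add: SEG1_def)
  then have "enat (plen \<gamma>) \<le> (SUP \<gamma>'\<in>SEG1 arr x. enat (plen \<gamma>'))" by (rule SUP_upper)
  then show ?thesis using g by simp
qed

lemma part1: assumes "extremal arr \<gamma>" "s \<in> {0<..<1}" "t \<in> {0<..<1}"
  shows "Cpath f g \<gamma> s = Cpath f g \<gamma> t"
proof (rule const_on_01[OF _ assms(2,3)])
  fix \<tau> assume \<tau>: "\<tau> \<in> {0<..<(1::real)}"
  have "Bwd arr (hd \<gamma>) = {}" "Fwd arr (last \<gamma>) = {}" using assms(1)
    by (auto simp: extremal_def Aset_def Bset_def)
  then show "(Cpath f g \<gamma> has_real_derivative 0) (at \<tau>)"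
    using Cpath_deriv[OF _ \<tau>, of \<gamma>] assms(1) by (simp add: extremal_def)
qed

lemma part2_aux:
  "\<forall>x \<gamma>. hgt x = n \<longrightarrow> \<gamma> \<in> SEG1 arr x \<longrightarrow>
     (\<exists>p :: real poly. (\<forall>t\<in>{0<..<1}. Cpath f g \<gamma> t = poly p t) \<and> degree p \<le> n)"
proof (induction n rule: less_induct)
  case (less n)
  show ?case
  proof (intro allI impI)
    fix x \<gamma> assume hx: "hgt x = n" and sg: "\<gamma> \<in> SEG1 arr x"
    have op: "oriented_path arr \<gamma>" and A: "Bwd arr (hd \<gamma>) = {}" and lx: "last \<gamma> = x"
      using sg by (auto simp: SEG1_def Aset_def)
    have D: "(Cpath f g \<gamma> has_real_derivative - (\<Sum>y\<in>Fwd arr x. Cpath f g (\<gamma> @ [y]) t)) (at t)"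
      if "t \<in> {0<..<1}" for t
      using Cpath_deriv[OF op that] A lx by simp
    have "\<forall>y\<in>Fwd arr x. \<exists>p :: real poly. (\<forall>t\<in>{0<..<1}. Cpath f g (\<gamma> @ [y]) t = poly p t) \<and> degree p \<le> hgt y"
    proof
      fix y assume y: "y \<in> Fwd arr x"
      then have "hgt y < n" using hgt_Fwd[of x y] hx by (simp add: Fwd_def)
      moreover have "\<gamma> @ [y] \<in> SEG1 arr y"
        using sg y op_snoc[OF op, of y] lx op by (auto simp: SEG1_def Fwd_def oriented_path_def)
      ultimately show "\<exists>p :: real poly. (\<forall>t\<in>{0<..<1}. Cpath f g (\<gamma> @ [y]) t = poly p t) \<and> degree p \<le> hgt y"
        using less by blast
    qed
    then obtain P where P: "\<And>y. y \<in> Fwd arr x \<Longrightarrow> (\<forall>t\<in>{0<..<1}. Cpath f g (\<gamma> @ [y]) t = poly (P y) t) \<and> degree (P y) \<le> hgt y"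
      by metis
    define q where "q = - (\<Sum>y\<in>Fwd arr x. P y)"
    have Dq: "(Cpath f g \<gamma> has_real_derivative poly q t) (at t)" if "t \<in> {0<..<1}" for t
    proof -
      have "(\<Sum>y\<in>Fwd arr x. Cpath f g (\<gamma> @ [y]) t) = poly (\<Sum>y\<in>Fwd arr x. P y) t"
        unfolding poly_sum using P that by simp
      then show ?thesis using D[OF that] by (simp add: q_def)
    qed
    show "\<exists>p :: real poly. (\<forall>t\<in>{0<..<1}. Cpath f g \<gamma> t = poly p t) \<and> degree p \<le> n"
    proof (cases n)
      case 0
      have "Fwd arr x = {}"
      proof (rule ccontr)
        assume "Fwd arr x \<noteq> {}"
        then obtain y where "arr x y" by (auto simp: Fwd_def)
        then have "hgt y < hgt x" by (rule hgt_Fwd)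
        with hx 0 show False by simp
      qed
      then have "q = 0" by (simp add: q_def)
      then have d0: "(Cpath f g \<gamma> has_real_derivative 0) (at \<tau>)" if "\<tau> \<in> {0<..<1}" for \<tau>
        using Dq[OF that] by simp
      have c: "Cpath f g \<gamma> t = poly [:Cpath f g \<gamma> (1/2):] t" if "t \<in> {0<..<1}" for t
        using const_on_01[of "Cpath f g \<gamma>" t "1/2", OF d0 that] by simp
      have "degree [:Cpath f g \<gamma> (1/2):] \<le> n" by simp
      with c show ?thesis by blast
    next
      case (Suc m)
      have "degree (\<Sum>y\<in>Fwd arr x. P y) \<le> m"
      proof (rule degree_sum_le[OF fin_Fwd])
        fix y assume y: "y \<in> Fwd arr x"
        then have "hgt y < n" using hgt_Fwd[of x y] hx by (simp add: Fwd_def)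
        then show "degree (P y) \<le> m" using P[OF y] Suc by simp
      qed
      then have "degree q \<le> m" by (simp add: q_def)
      then obtain p where "\<forall>t\<in>{0<..<1}. Cpath f g \<gamma> t = poly p t" "degree p \<le> Suc (degree q)"
        using poly_from_deriv[of "Cpath f g \<gamma>" q] Dq by blast
      then show ?thesis using \<open>degree q \<le> m\<close> Suc by (intro exI[of _ p]) auto
    qed
  qed
qed

lemma part3_aux:
  "\<forall>x \<gamma>. dep x = n \<longrightarrow> \<gamma> \<in> SEG2 arr x \<longrightarrow>
     (\<exists>p :: real poly. (\<forall>t\<in>{0<..<1}. Cpath f g \<gamma> t = poly p t) \<and> degree p \<le> n)"
proof (induction n rule: less_induct)
  case (less n)
  show ?case
  proof (intro allI impI)
    fix x \<gamma> assume hx: "dep x = n" and sg: "\<gamma> \<in> SEG2 arr x"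
    have op: "oriented_path arr \<gamma>" and B: "Fwd arr (last \<gamma>) = {}" and lx: "hd \<gamma> = x"
      using sg by (auto simp: SEG2_def Bset_def)
    have ne: "\<gamma> \<noteq> []" using op by (simp add: oriented_path_def)
    have D: "(Cpath f g \<gamma> has_real_derivative (\<Sum>w\<in>Bwd arr x. Cpath f g (w # \<gamma>) t)) (at t)"
      if "t \<in> {0<..<1}" for t
      using Cpath_deriv[OF op that] B lx by simp
    have "\<forall>w\<in>Bwd arr x. \<exists>p :: real poly. (\<forall>t\<in>{0<..<1}. Cpath f g (w # \<gamma>) t = poly p t) \<and> degree p \<le> dep w"
    proof
      fix w assume w: "w \<in> Bwd arr x"
      then have "dep w < n" using dep_Bwd[of w x] hx by (simp add: Bwd_def)
      moreover have "w # \<gamma> \<in> SEG2 arr w"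
        using sg w op_Cons[OF op, of w] lx ne by (auto simp: SEG2_def Bwd_def)
      ultimately show "\<exists>p :: real poly. (\<forall>t\<in>{0<..<1}. Cpath f g (w # \<gamma>) t = poly p t) \<and> degree p \<le> dep w"
        using less by blast
    qed
    then obtain P where P: "\<And>w. w \<in> Bwd arr x \<Longrightarrow> (\<forall>t\<in>{0<..<1}. Cpath f g (w # \<gamma>) t = poly (P w) t) \<and> degree (P w) \<le> dep w"
      by metis
    define q where "q = (\<Sum>w\<in>Bwd arr x. P w)"
    have Dq: "(Cpath f g \<gamma> has_real_derivative poly q t) (at t)" if "t \<in> {0<..<1}" for t
    proof -
      have "(\<Sum>w\<in>Bwd arr x. Cpath f g (w # \<gamma>) t) = poly (\<Sum>w\<in>Bwd arr x. P w) t"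
        unfolding poly_sum using P that by simp
      then show ?thesis using D[OF that] by (simp add: q_def)
    qed
    show "\<exists>p :: real poly. (\<forall>t\<in>{0<..<1}. Cpath f g \<gamma> t = poly p t) \<and> degree p \<le> n"
    proof (cases n)
      case 0
      have "Bwd arr x = {}"
      proof (rule ccontr)
        assume "Bwd arr x \<noteq> {}"
        then obtain w where "arr w x" by (auto simp: Bwd_def)
        then have "dep w < dep x" by (rule dep_Bwd)
        with hx 0 show False by simp
      qed
      then have "q = 0" by (simp add: q_def)
      then have d0: "(Cpath f g \<gamma> has_real_derivative 0) (at \<tau>)" if "\<tau> \<in> {0<..<1}" for \<tau>
        using Dq[OF that] by simp
      have c: "Cpath f g \<gamma> t = poly [:Cpath f g \<gamma> (1/2):] t" if "t \<in> {0<..<1}" for t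
        using const_on_01[of "Cpath f g \<gamma>" t "1/2", OF d0 that] by simp
      have "degree [:Cpath f g \<gamma> (1/2):] \<le> n" by simp
      with c show ?thesis by blast
    next
      case (Suc m)
      have "degree q \<le> m" unfolding q_def
      proof (rule degree_sum_le[OF fin_Bwd])
        fix w assume w: "w \<in> Bwd arr x"
        then have "dep w < n" using dep_Bwd[of w x] hx by (simp add: Bwd_def)
        then show "degree (P w) \<le> m" using P[OF w] Suc by simp
      qed
      then obtain p where "\<forall>t\<in>{0<..<1}. Cpath f g \<gamma> t = poly p t" "degree p \<le> Suc (degree q)"
        using poly_from_deriv[of "Cpath f g \<gamma>" q] Dq by blast
      then show ?thesis using \<open>degree q \<le> m\<close> Suc by (intro exI[of _ p]) auto
    qed
  qed
qed

lemma main: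
  "(\<forall>\<gamma>. extremal arr \<gamma> \<longrightarrow>
            (\<forall>s\<in>{0<..<1}. \<forall>t\<in>{0<..<1}. Cpath f g \<gamma> s = Cpath f g \<gamma> t))
       \<and> (\<forall>x \<gamma>. \<gamma> \<in> SEG1 arr x \<longrightarrow>
            (\<exists>p :: real poly. (\<forall>t\<in>{0<..<1}. Cpath f g \<gamma> t = poly p t) \<and>
               enat (degree p) \<le> (SUP \<gamma>'\<in>SEG2 arr x. enat (plen \<gamma>'))))
       \<and> (\<forall>x \<gamma>. \<gamma> \<in> SEG2 arr x \<longrightarrow>
            (\<exists>p :: real poly. (\<forall>t\<in>{0<..<1}. Cpath f g \<gamma> t = poly p t) \<and>
               enat (degree p) \<le> (SUP \<gamma>'\<in>SEG1 arr x. enat (plen \<gamma>'))))"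
proof (intro conjI allI impI ballI)
  fix \<gamma> s t assume "extremal arr \<gamma>" "s \<in> {0<..<1::real}" "t \<in> {0<..<1::real}"
  then show "Cpath f g \<gamma> s = Cpath f g \<gamma> t" by (rule part1)
next
  fix x \<gamma> assume "\<gamma> \<in> SEG1 arr x"
  then obtain p where p: "\<forall>t\<in>{0<..<1}. Cpath f g \<gamma> t = poly p t" "degree p \<le> hgt x"
    using part2_aux by blast
  have "enat (degree p) \<le> enat (hgt x)" using p(2) by simp
  also have "\<dots> \<le> (SUP \<gamma>'\<in>SEG2 arr x. enat (plen \<gamma>'))" by (rule hgt_SEG2)
  finally show "\<exists>p :: real poly. (\<forall>t\<in>{0<..<1}. Cpath f g \<gamma> t = poly p t) \<and>
               enat (degree p) \<le> (SUP \<gamma>'\<in>SEG2 arr x. enat (plen \<gamma>'))" using p(1) by blast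
next
  fix x \<gamma> assume "\<gamma> \<in> SEG2 arr x"
  then obtain p where p: "\<forall>t\<in>{0<..<1}. Cpath f g \<gamma> t = poly p t" "degree p \<le> dep x"
    using part3_aux by blast
  have "enat (degree p) \<le> enat (dep x)" using p(2) by simp
  also have "\<dots> \<le> (SUP \<gamma>'\<in>SEG1 arr x. enat (plen \<gamma>'))" by (rule dep_SEG1)
  finally show "\<exists>p :: real poly. (\<forall>t\<in>{0<..<1}. Cpath f g \<gamma> t = poly p t) \<and>
               enat (degree p) \<le> (SUP \<gamma>'\<in>SEG1 arr x. enat (plen \<gamma>'))" using p(1) by blast
qed

end
theorem proposition3p4:
  fixes adj :: "'v \<Rightarrow> 'v \<Rightarrow> bool"
    and f :: "real \<Rightarrow> 'v \<Rightarrow> real"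
    and g :: "real \<Rightarrow> 'v \<Rightarrow> 'v \<Rightarrow> real"
    and h :: "real \<Rightarrow> 'v \<Rightarrow> 'v \<Rightarrow> 'v \<Rightarrow> real"
  assumes "conn_lf_graph adj"
    and "W1plus_geodesic adj f g h"
  shows "(\<forall>\<gamma>. extremal (W1_orient adj (f 0) (f 1)) \<gamma> \<longrightarrow>
            (\<forall>s\<in>{0<..<1}. \<forall>t\<in>{0<..<1}. Cpath f g \<gamma> s = Cpath f g \<gamma> t))
       \<and> (\<forall>x \<gamma>. \<gamma> \<in> SEG1 (W1_orient adj (f 0) (f 1)) x \<longrightarrow>
            (\<exists>p :: real poly. (\<forall>t\<in>{0<..<1}. Cpath f g \<gamma> t = poly p t) \<and>
               enat (degree p) \<le> (SUP \<gamma>'\<in>SEG2 (W1_orient adj (f 0) (f 1)) x. enat (plen \<gamma>'))))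
       \<and> (\<forall>x \<gamma>. \<gamma> \<in> SEG2 (W1_orient adj (f 0) (f 1)) x \<longrightarrow>
            (\<exists>p :: real poly. (\<forall>t\<in>{0<..<1}. Cpath f g \<gamma> t = poly p t) \<and>
               enat (degree p) \<le> (SUP \<gamma>'\<in>SEG1 (W1_orient adj (f 0) (f 1)) x. enat (plen \<gamma>'))))"
proof -
  interpret geo adj f g h using assms by (unfold_locales)
  show ?thesis by (rule main)
qed

end
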